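(* Let $G=(V,E)$ be a connected graph on $n\ge 2$ vertices with maximum degree $\Delta$. (i) $\gamma^{DLD}(G)\le n-\beta_2(G)\le \left\lfloor n\left(1-\frac{1}{\Delta^2+1}\right)\right\rfloor$. (ii) If moreover $N(u)\not\subseteq N(v)$ for all distinct $u,v\in V$, then $\gamma^{DLD}(G)\le n-\beta(G)\le \left\lfloor n\left(1-\frac{1}{\Delta+1}\right)\right\rfloor$. (iii) If moreover $N(u)\not\subseteq N[v]$ for all distinct $u,v\in V$, then $\gamma^{SLD}(G)\le n-\beta(G)\le \left\lfloor n\left(1-\frac{1}{\Delta+1}\right)\right\rfloor$.
   Context: Graphs are finite, simple and undirected. For $u\in V$, $N(u)$ is the set of neighbours of $u$ and $N[u]=N(u)\cup\{u\}$; $d(u,v)$ is the distance. A code is a non-empty subset $C\subseteq V$; $I(C;u)=N[u]\cap C$. A code $C$ is self-locating-dominating if for every $u\in V\setminus C$ we have $I(C;u)\neq\emptyset$ and $\bigcap_{c\in I(C;u)}N[c]=\{u\}$. A code $C$ is solid-locating-dominating if $I(C;u)\ne\emptyset$ for every $u\in V\setminus C$ and $I(C;u)\not\subseteq I(C;v)$ for all distinct $u,v\in V\setminus C$. $\gamma^{SLD}(G)$, $\gamma^{DLD}(G)$ are the minimum sizes of such codes. $\beta(G)$ is the independence number of $G$. $\beta_2(G)$ is the maximum size of a set $S\subseteq V$ with $d(u,v)\ge 3$ for all distinct $u,v\in S$. *)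

theory Defs
  imports Complex_Main
begin

definition graph :: "'a set \<Rightarrow> ('a \<Rightarrow> 'a \<Rightarrow> bool) \<Rightarrow> bool" where
  "graph V E \<longleftrightarrow> finite V \<and> (\<forall>u v. E u v \<longrightarrow> u \<in> V \<and> v \<in> V)
     \<and> (\<forall>u v. E u v \<longrightarrow> E v u) \<and> (\<forall>u. \<not> E u u)"

definition nbhd :: "'a set \<Rightarrow> ('a \<Rightarrow> 'a \<Rightarrow> bool) \<Rightarrow> 'a \<Rightarrow> 'a set" where
  "nbhd V E u = {v \<in> V. E u v}"

definition cnbhd :: "'a set \<Rightarrow> ('a \<Rightarrow> 'a \<Rightarrow> bool) \<Rightarrow> 'a \<Rightarrow> 'a set" where
  "cnbhd V E u = insert u (nbhd V E u)"

fun walk :: "'a set \<Rightarrow> ('a \<Rightarrow> 'a \<Rightarrow> bool) \<Rightarrow> nat \<Rightarrow> 'a \<Rightarrow> 'a \<Rightarrow> bool" where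
  "walk V E 0 u v = (u = v \<and> u \<in> V)"
| "walk V E (Suc k) u v = (\<exists>w\<in>V. E u w \<and> walk V E k w v)"

definition connected_graph :: "'a set \<Rightarrow> ('a \<Rightarrow> 'a \<Rightarrow> bool) \<Rightarrow> bool" where
  "connected_graph V E \<longleftrightarrow> (\<forall>u\<in>V. \<forall>v\<in>V. \<exists>k. walk V E k u v)"

definition gdist :: "'a set \<Rightarrow> ('a \<Rightarrow> 'a \<Rightarrow> bool) \<Rightarrow> 'a \<Rightarrow> 'a \<Rightarrow> nat" where
  "gdist V E u v = (LEAST k. walk V E k u v)"

definition max_degree :: "'a set \<Rightarrow> ('a \<Rightarrow> 'a \<Rightarrow> bool) \<Rightarrow> nat" where
  "max_degree V E = Max ((\<lambda>v. card (nbhd V E v)) ` V)"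

definition I_code :: "'a set \<Rightarrow> ('a \<Rightarrow> 'a \<Rightarrow> bool) \<Rightarrow> 'a set \<Rightarrow> 'a \<Rightarrow> 'a set" where
  "I_code V E C u = cnbhd V E u \<inter> C"

definition code :: "'a set \<Rightarrow> 'a set \<Rightarrow> bool" where
  "code V C \<longleftrightarrow> C \<subseteq> V \<and> C \<noteq> {}"

definition self_LD :: "'a set \<Rightarrow> ('a \<Rightarrow> 'a \<Rightarrow> bool) \<Rightarrow> 'a set \<Rightarrow> bool" where
  "self_LD V E C \<longleftrightarrow> code V C \<and>
     (\<forall>u\<in>V - C. I_code V E C u \<noteq> {} \<and> (\<Inter>c\<in>I_code V E C u. cnbhd V E c) = {u})"

definition solid_LD :: "'a set \<Rightarrow> ('a \<Rightarrow> 'a \<Rightarrow> bool) \<Rightarrow> 'a set \<Rightarrow> bool" where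
  "solid_LD V E C \<longleftrightarrow> code V C \<and>
     (\<forall>u\<in>V - C. I_code V E C u \<noteq> {}) \<and>
     (\<forall>u\<in>V - C. \<forall>v\<in>V - C. u \<noteq> v \<longrightarrow> \<not> (I_code V E C u \<subseteq> I_code V E C v))"

definition gamma_SLD :: "'a set \<Rightarrow> ('a \<Rightarrow> 'a \<Rightarrow> bool) \<Rightarrow> nat" where
  "gamma_SLD V E = Min (card ` {C. self_LD V E C})"

definition gamma_DLD :: "'a set \<Rightarrow> ('a \<Rightarrow> 'a \<Rightarrow> bool) \<Rightarrow> nat" where
  "gamma_DLD V E = Min (card ` {C. solid_LD V E C})"

definition beta :: "'a set \<Rightarrow> ('a \<Rightarrow> 'a \<Rightarrow> bool) \<Rightarrow> nat" where
  "beta V E = Max (card ` {S. S \<subseteq> V \<and> (\<forall>u\<in>S. \<forall>v\<in>S. \<not> E u v)})"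

definition beta2 :: "'a set \<Rightarrow> ('a \<Rightarrow> 'a \<Rightarrow> bool) \<Rightarrow> nat" where
  "beta2 V E = Max (card ` {S. S \<subseteq> V \<and>
      (\<forall>u\<in>S. \<forall>v\<in>S. u \<noteq> v \<longrightarrow> gdist V E u v \<ge> 3)})"

end

theory Submission
  imports Defs
begin


lemma walk1: "walk V E 1 u v \<longleftrightarrow> E u v \<and> v \<in> V"
  by auto

lemma walk2: "walk V E 2 u v \<longleftrightarrow> (\<exists>w\<in>V. E u w \<and> E w v \<and> v \<in> V)"
  by (auto simp: numeral_2_eq_2)

lemma gdist_le: "walk V E k u v \<Longrightarrow> gdist V E u v \<le> k"
  unfolding gdist_def by (rule Least_le)

lemma gdist_ge3:
  assumes "\<exists>k. walk V E k u v" "\<And>k. k < 3 \<Longrightarrow> \<not> walk V E k u v"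
  shows "gdist V E u v \<ge> 3"
proof -
  have "walk V E (gdist V E u v) u v" unfolding gdist_def using assms(1) by (rule LeastI_ex)
  then show ?thesis using assms(2) by (meson not_less)
qed

lemma deg_le: "graph V E \<Longrightarrow> v \<in> V \<Longrightarrow> card (nbhd V E v) \<le> max_degree V E"
  unfolding max_degree_def graph_def by (auto intro: Max_ge)

lemma nbhd_sub: "nbhd V E v \<subseteq> V" unfolding nbhd_def by auto

lemma finite_nbhd: "graph V E \<Longrightarrow> finite (nbhd V E v)"
  unfolding graph_def nbhd_def by auto

lemma has_nb:
  assumes G: "graph V E" and conn: "connected_graph V E" and n2: "card V \<ge> 2" and u: "u \<in> V"
  shows "\<exists>w. w \<in> nbhd V E u"
proof -
  have "V - {u} \<noteq> {}"
  proof
    assume "V - {u} = {}"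
    then have "V \<subseteq> {u}" by blast
    then have "card V \<le> 1" by (metis card.empty card_insert_if card_mono finite.emptyI finite.insertI empty_iff One_nat_def)
    then show False using n2 by simp
  qed
  then obtain v where v: "v \<in> V" "v \<noteq> u" by blast
  then obtain k where k: "walk V E k u v" using conn u unfolding connected_graph_def by blast
  then show ?thesis using v by (cases k) (auto simp: nbhd_def)
qed

lemma card_cover:
  assumes "finite S" "V \<subseteq> (\<Union>s\<in>S. B s)" "\<And>s. s \<in> S \<Longrightarrow> card (B s) \<le> m"
    "\<And>s. s \<in> S \<Longrightarrow> finite (B s)"
  shows "card V \<le> card S * m"
proof -
  have "card V \<le> card (\<Union>s\<in>S. B s)" using assms by (intro card_mono) auto
  also have "\<dots> \<le> (\<Sum>s\<in>S. card (B s))" by (rule card_UN_le) fact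
  also have "\<dots> \<le> card S * m" using assms(3) sum_bounded_above[of S "\<lambda>s. card (B s)" m] by auto
  finally show ?thesis .
qed

lemma floor_bound:
  fixes n b D :: nat
  assumes "n \<le> b * (D + 1)" "b \<le> n"
  shows "int (n - b) \<le> \<lfloor>real n * (1 - 1 / (real D + 1))\<rfloor>"
proof -
  have "real n \<le> real b * (real D + 1)" using assms(1) by (metis of_nat_1 of_nat_add of_nat_le_iff of_nat_mult)
  then have "real n / (real D + 1) \<le> real b" by (simp add: divide_le_eq)
  then have "real (n - b) \<le> real n * (1 - 1 / (real D + 1))"
    using assms(2) by (simp add: of_nat_diff right_diff_distrib)
  then show ?thesis by (simp add: le_floor_iff)
qed


definition pack2 where
  "pack2 V E S \<longleftrightarrow> S \<subseteq> V \<and> (\<forall>u\<in>S. \<forall>v\<in>S. u \<noteq> v \<longrightarrow> gdist V E u v \<ge> 3)"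

definition indep where
  "indep V E S \<longleftrightarrow> S \<subseteq> V \<and> (\<forall>u\<in>S. \<forall>v\<in>S. \<not> E u v)"

lemma beta2_obtain:
  assumes G: "graph V E"
  obtains S where "pack2 V E S" "card S = beta2 V E" "\<And>T. pack2 V E T \<Longrightarrow> card T \<le> beta2 V E"
proof -
  let ?F = "{S. S \<subseteq> V \<and> (\<forall>u\<in>S. \<forall>v\<in>S. u \<noteq> v \<longrightarrow> gdist V E u v \<ge> 3)}"
  have "?F \<subseteq> Pow V" by blast
  moreover have "finite V" using G unfolding graph_def by blast
  ultimately have fin: "finite ?F" by (meson finite_Pow_iff finite_subset)
  have ne: "card ` ?F \<noteq> {}" by blast
  have "beta2 V E \<in> card ` ?F" unfolding beta2_def by (rule Max_in[OF finite_imageI[OF fin] ne])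
  then obtain S where "S \<in> ?F" "card S = beta2 V E" by auto
  moreover have "\<And>T. pack2 V E T \<Longrightarrow> card T \<le> beta2 V E"
    unfolding beta2_def pack2_def using fin by (intro Max_ge) (auto intro: finite_imageI)
  ultimately show ?thesis using that unfolding pack2_def by auto
qed

lemma beta_obtain:
  assumes G: "graph V E"
  obtains S where "indep V E S" "card S = beta V E" "\<And>T. indep V E T \<Longrightarrow> card T \<le> beta V E"
proof -
  let ?F = "{S. S \<subseteq> V \<and> (\<forall>u\<in>S. \<forall>v\<in>S. \<not> E u v)}"
  have "?F \<subseteq> Pow V" by blast
  moreover have "finite V" using G unfolding graph_def by blast
  ultimately have fin: "finite ?F" by (meson finite_Pow_iff finite_subset)
  have ne: "card ` ?F \<noteq> {}" by blast
  have "beta V E \<in> card ` ?F" unfolding beta_def by (rule Max_in[OF finite_imageI[OF fin] ne])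
  then obtain S where "S \<in> ?F" "card S = beta V E" by auto
  moreover have "\<And>T. indep V E T \<Longrightarrow> card T \<le> beta V E"
    unfolding beta_def indep_def using fin by (intro Max_ge) (auto intro: finite_imageI)
  ultimately show ?thesis using that unfolding indep_def by auto
qed

lemma pack2_far:
  assumes "pack2 V E S" "u \<in> S" "v \<in> S" "u \<noteq> v" "k < 3"
  shows "\<not> walk V E k u v"
  using assms gdist_le[of V E k u v] unfolding pack2_def by fastforce

lemma gamma_DLD_le:
  assumes G: "graph V E" and "solid_LD V E C"
  shows "gamma_DLD V E \<le> card C"
proof -
  have "{C. solid_LD V E C} \<subseteq> Pow V" unfolding solid_LD_def code_def by blast
  moreover have "finite V" using G unfolding graph_def by blast
  ultimately have "finite {C. solid_LD V E C}" by (meson finite_Pow_iff finite_subset)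
  then show ?thesis unfolding gamma_DLD_def using assms(2) by (intro Min_le) (auto intro: finite_imageI)
qed

lemma gamma_SLD_le:
  assumes G: "graph V E" and "self_LD V E C"
  shows "gamma_SLD V E \<le> card C"
proof -
  have "{C. self_LD V E C} \<subseteq> Pow V" unfolding self_LD_def code_def by blast
  moreover have "finite V" using G unfolding graph_def by blast
  ultimately have "finite {C. self_LD V E C}" by (meson finite_Pow_iff finite_subset)
  then show ?thesis unfolding gamma_SLD_def using assms(2) by (intro Min_le) (auto intro: finite_imageI)
qed

lemma I_code_eq:
  assumes G: "graph V E" and S: "S \<subseteq> V" "u \<in> S" and dis: "nbhd V E u \<inter> S = {}"
  shows "I_code V E (V - S) u = nbhd V E u"
  using assms nbhd_sub[of V E u] unfolding I_code_def cnbhd_def by auto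

lemma card_V_Diff: "graph V E \<Longrightarrow> S \<subseteq> V \<Longrightarrow> card (V - S) = card V - card S"
  unfolding graph_def by (meson card_Diff_subset finite_subset)


lemma walk_lt3: "k < (3::nat) \<Longrightarrow> walk V E k u v \<Longrightarrow>
   (u = v) \<or> E u v \<or> (\<exists>w\<in>V. E u w \<and> E w v)"
proof -
  assume a: "k < 3" "walk V E k u v"
  then have "k = 0 \<or> k = Suc 0 \<or> k = Suc (Suc 0)" by linarith
  then show ?thesis using a(2) by (elim disjE) auto
qed

lemma card_ins_le: "card (insert x A) \<le> card A + 1"
  by (cases "finite A") (auto simp: card_insert_if)

lemma part1:
  assumes G: "graph V E" and conn: "connected_graph V E" and n2: "card V \<ge> 2"
  shows "gamma_DLD V E \<le> card V - beta2 V E \<and>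
     int (card V - beta2 V E) \<le> \<lfloor>real (card V) * (1 - 1 / (real (max_degree V E) ^ 2 + 1))\<rfloor>"
proof -
  let ?D = "max_degree V E"
  obtain S where S: "pack2 V E S" "card S = beta2 V E" and mx: "\<And>T. pack2 V E T \<Longrightarrow> card T \<le> beta2 V E"
    using beta2_obtain[OF G] by blast
  have SV: "S \<subseteq> V" using S unfolding pack2_def by auto
  have finV: "finite V" using G unfolding graph_def by auto
  have sym: "\<And>a b. E a b \<Longrightarrow> E b a" and inV: "\<And>a b. E a b \<Longrightarrow> a \<in> V \<and> b \<in> V"
    and irr: "\<And>a. \<not> E a a" using G unfolding graph_def by auto
  have nb: "\<And>u. u \<in> V \<Longrightarrow> \<exists>w. w \<in> nbhd V E u" using has_nb[OF G conn n2] by blast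
  have dis: "nbhd V E u \<inter> S = {}" if "u \<in> S" for u
  proof (rule ccontr)
    assume "nbhd V E u \<inter> S \<noteq> {}"
    then obtain w where w: "w \<in> S" "E u w" unfolding nbhd_def by auto
    then have "walk V E 1 u w" using inV by auto
    moreover have "u \<noteq> w" using w irr by auto
    ultimately show False using pack2_far[OF S(1) that w(1), of 1] by auto
  qed
  have Vne: "V \<noteq> {}" using n2 by auto
  have Cne: "V - S \<noteq> {}"
  proof
    assume "V - S = {}"
    then have "S = V" using SV by auto
    obtain u where "u \<in> V" using Vne by auto
    then obtain w where "w \<in> nbhd V E u" using nb by blast
    then show False using dis[of u] \<open>S = V\<close> \<open>u \<in> V\<close> nbhd_sub[of V E u] by auto
  qed
  have VC: "V - (V - S) = S" using SV by auto
  have Ieq: "I_code V E (V - S) u = nbhd V E u" if "u \<in> S" for u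
    using I_code_eq[OF G SV that dis[OF that]] .
  have solid: "solid_LD V E (V - S)"
    unfolding solid_LD_def code_def VC
  proof (intro conjI ballI impI)
    show "V - S \<subseteq> V" "V - S \<noteq> {}" using Cne by auto
  next
    fix u assume "u \<in> S"
    then have "u \<in> V" using SV by blast
    then obtain w where "w \<in> nbhd V E u" using nb by blast
    then show "I_code V E (V - S) u \<noteq> {}" using Ieq[OF \<open>u \<in> S\<close>] by blast
  next
    fix u v assume uv: "u \<in> S" "v \<in> S" "u \<noteq> v"
    show "\<not> I_code V E (V - S) u \<subseteq> I_code V E (V - S) v"
    proof
      assume sub: "I_code V E (V - S) u \<subseteq> I_code V E (V - S) v"
      have "u \<in> V" using uv SV by blast
      then obtain w where w: "w \<in> nbhd V E u" using nb by blast
      then have "w \<in> I_code V E (V - S) u" using Ieq[OF uv(1)] by simp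
      then have "w \<in> I_code V E (V - S) v" by (rule subsetD[OF sub])
      then have "w \<in> nbhd V E v" using Ieq[OF uv(2)] by simp
      then have "E v w" "w \<in> V" "E u w" using w unfolding nbhd_def by simp_all
      moreover have "v \<in> V" using uv SV by blast
      ultimately have "E w v" "w \<in> V" "v \<in> V" "E u w" using sym[of v w] by simp_all
      then have "walk V E 2 u v" unfolding walk2 by blast
      then show False using pack2_far[OF S(1) uv, of 2] by simp
    qed
  qed
  have g: "gamma_DLD V E \<le> card V - beta2 V E"
    using gamma_DLD_le[OF G solid] card_V_Diff[OF G SV] S(2) by simp
  define B where "B s = insert s (\<Union>c\<in>nbhd V E s. cnbhd V E c - {s})" for s
  have cov: "V \<subseteq> (\<Union>s\<in>S. B s)"
  proof
    fix v assume v: "v \<in> V"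
    show "v \<in> (\<Union>s\<in>S. B s)"
    proof (rule ccontr)
      assume nc: "v \<notin> (\<Union>s\<in>S. B s)"
      have far: "\<not> ((s = v) \<or> E s v \<or> (\<exists>w\<in>V. E s w \<and> E w v))" if "s \<in> S" for s
      proof
        assume h: "(s = v) \<or> E s v \<or> (\<exists>w\<in>V. E s w \<and> E w v)"
        have nB: "v \<notin> B s" using nc that by blast
        then have vs: "v \<noteq> s" unfolding B_def by blast
        have nU: "\<And>c. c \<in> nbhd V E s \<Longrightarrow> v \<notin> cnbhd V E c" using nB vs unfolding B_def by blast
        show False
        proof -
          { assume "E s v"
            then have "v \<in> nbhd V E s" using v unfolding nbhd_def by blast
            moreover have "v \<in> cnbhd V E v" unfolding cnbhd_def by blast
            ultimately have False using nU by blast }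
          moreover
          { fix w assume w: "w \<in> V" "E s w" "E w v"
            then have "w \<in> nbhd V E s" unfolding nbhd_def by blast
            moreover have "v \<in> cnbhd V E w" using w v unfolding cnbhd_def nbhd_def by blast
            ultimately have False using nU by blast }
          ultimately show False using h vs by blast
        qed
      qed
      have vS: "v \<notin> S" using far[of v] by blast
      have "pack2 V E (insert v S)"
        unfolding pack2_def
      proof (intro conjI ballI impI)
        show "insert v S \<subseteq> V" using v SV by auto
      next
        fix a b assume ab: "a \<in> insert v S" "b \<in> insert v S" "a \<noteq> b"
        show "3 \<le> gdist V E a b"
        proof (cases "a \<in> S \<and> b \<in> S")
          case True
          then show ?thesis using S(1) ab unfolding pack2_def by auto
        next
          case False
          then have "(a = v \<and> b \<in> S) \<or> (b = v \<and> a \<in> S)" using ab by auto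
          moreover have "a \<in> V" "b \<in> V" using ab v SV by auto
          ultimately obtain x where xy: "x \<in> S" "(a = v \<and> b = x) \<or> (b = v \<and> a = x)" by blast
          have fx: "\<not> ((x = v) \<or> E x v \<or> (\<exists>w\<in>V. E x w \<and> E w v))" using far[OF xy(1)] .
          show ?thesis
          proof (rule gdist_ge3)
            show "\<exists>k. walk V E k a b" using bspec[OF bspec[OF conn[unfolded connected_graph_def] \<open>a \<in> V\<close>] \<open>b \<in> V\<close>] .
          next
            fix k :: nat assume k: "k < 3"
            show "\<not> walk V E k a b"
            proof
              assume "walk V E k a b"
              then have h: "(a = b) \<or> E a b \<or> (\<exists>w\<in>V. E a w \<and> E w b)" by (rule walk_lt3[OF k])
              from xy(2) show False
              proof
                assume ab2: "a = v \<and> b = x"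
                from h show False
                proof (elim disjE)
                  assume "a = b" then show False using ab2 fx by blast
                next
                  assume "E a b" then have "E x v" using ab2 sym[of v x] by simp
                  then show False using fx by blast
                next
                  assume "\<exists>w\<in>V. E a w \<and> E w b"
                  then obtain w where "w \<in> V" "E v w" "E w x" using ab2 by blast
                  then have "w \<in> V" "E x w" "E w v" using sym[of v w] sym[of w x] by simp_all
                  then show False using fx by blast
                qed
              next
                assume ab2: "b = v \<and> a = x"
                then show False using h fx by simp
              qed
            qed
          qed
        qed
      qed
      then have c1: "card (insert v S) \<le> card S" using mx[of "insert v S"] S(2) by simp
      have "finite S" using finite_subset[OF SV finV] .
      then have "card (insert v S) = card S + 1" using vS by simp
      then show False using c1 by simp
    qed
  qed
  have cardB: "card (B s) \<le> ?D ^ 2 + 1" if s: "s \<in> S" for s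
  proof -
    have sV: "s \<in> V" using s SV by auto
    have fn: "finite (nbhd V E s)" using finite_nbhd[OF G] .
    have cc: "card (cnbhd V E c - {s}) \<le> ?D" if c: "c \<in> nbhd V E s" for c
    proof -
      have cV: "c \<in> V" and Ecs: "E c s" using c sym unfolding nbhd_def by blast+
      have "s \<in> cnbhd V E c" using Ecs sV unfolding cnbhd_def nbhd_def by blast
      moreover have "card (cnbhd V E c) = card (nbhd V E c) + 1"
      proof -
        have "c \<notin> nbhd V E c" using irr unfolding nbhd_def by blast
        then show ?thesis unfolding cnbhd_def using finite_nbhd[OF G, of c] by simp
      qed
      ultimately have "card (cnbhd V E c - {s}) = card (nbhd V E c)"
        by (simp add: card_Diff_singleton_if)
      then show ?thesis using deg_le[OF G cV] by simp
    qed
    have "card (B s) \<le> card (\<Union>c\<in>nbhd V E s. cnbhd V E c - {s}) + 1"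
      unfolding B_def by (rule card_ins_le)
    also have "card (\<Union>c\<in>nbhd V E s. cnbhd V E c - {s}) \<le> (\<Sum>c\<in>nbhd V E s. card (cnbhd V E c - {s}))"
      using fn by (rule card_UN_le)
    also have "\<dots> \<le> of_nat (card (nbhd V E s)) * ?D" by (rule sum_bounded_above) (rule cc)
    also have "\<dots> = card (nbhd V E s) * ?D" by simp
    also have "\<dots> \<le> ?D * ?D" using deg_le[OF G sV] by simp
    finally show ?thesis by (simp add: power2_eq_square)
  qed
  have finB: "finite (B s)" if "s \<in> S" for s
  proof -
    have "B s \<subseteq> V" using that SV unfolding B_def cnbhd_def nbhd_def by auto
    then show ?thesis using finV finite_subset by auto
  qed
  have "card V \<le> card S * (?D ^ 2 + 1)"
    using card_cover[OF _ cov cardB finB] SV finV finite_subset by blast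
  then have "int (card V - card S) \<le> \<lfloor>real (card V) * (1 - 1 / (real (?D ^ 2) + 1))\<rfloor>"
    using floor_bound[of "card V" "card S" "?D^2"] card_mono[OF finV SV] by simp
  then show ?thesis using g S(2) by simp
qed


lemma part23:
  assumes G: "graph V E" and conn: "connected_graph V E" and n2: "card V \<ge> 2"
  shows "int (card V - beta V E) \<le> \<lfloor>real (card V) * (1 - 1 / (real (max_degree V E) + 1))\<rfloor>"
    and "(\<forall>u\<in>V. \<forall>v\<in>V. u \<noteq> v \<longrightarrow> \<not> nbhd V E u \<subseteq> nbhd V E v) \<Longrightarrow> gamma_DLD V E \<le> card V - beta V E"
    and "(\<forall>u\<in>V. \<forall>v\<in>V. u \<noteq> v \<longrightarrow> \<not> nbhd V E u \<subseteq> cnbhd V E v) \<Longrightarrow> gamma_SLD V E \<le> card V - beta V E"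
proof -
  let ?D = "max_degree V E"
  obtain S where S: "indep V E S" "card S = beta V E" and mx: "\<And>T. indep V E T \<Longrightarrow> card T \<le> beta V E"
    using beta_obtain[OF G] by blast
  have SV: "S \<subseteq> V" using S unfolding indep_def by blast
  have noE: "\<And>a b. a \<in> S \<Longrightarrow> b \<in> S \<Longrightarrow> \<not> E a b" using S unfolding indep_def by blast
  have finV: "finite V" using G unfolding graph_def by blast
  have finS: "finite S" using finite_subset[OF SV finV] .
  have sym: "\<And>a b. E a b \<Longrightarrow> E b a" and inV: "\<And>a b. E a b \<Longrightarrow> a \<in> V \<and> b \<in> V"
    and irr: "\<And>a. \<not> E a a" using G unfolding graph_def by blast+
  have nb: "\<And>u. u \<in> V \<Longrightarrow> \<exists>w. w \<in> nbhd V E u" using has_nb[OF G conn n2] by blast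
  have dis: "nbhd V E u \<inter> S = {}" if "u \<in> S" for u
    using noE[OF that] unfolding nbhd_def by blast
  have Ieq: "I_code V E (V - S) u = nbhd V E u" if "u \<in> S" for u
    using I_code_eq[OF G SV that dis[OF that]] .
  have Vne: "V \<noteq> {}" using n2 by auto
  have Cne: "V - S \<noteq> {}"
  proof
    assume "V - S = {}"
    then have SeqV: "S = V" using SV by blast
    obtain u where u: "u \<in> V" using Vne by blast
    then obtain w where w: "w \<in> nbhd V E u" using nb by blast
    have "w \<in> V" using w unfolding nbhd_def by simp
    then show False using dis[of u] SeqV u w by blast
  qed
  have VC: "V - (V - S) = S" using SV by blast
  have codeC: "code V (V - S)" unfolding code_def using Cne by blast
  have Ine: "I_code V E (V - S) u \<noteq> {}" if "u \<in> S" for u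
  proof -
    have "u \<in> V" using that SV by blast
    then obtain w where "w \<in> nbhd V E u" using nb by blast
    then show ?thesis using Ieq[OF that] by blast
  qed
  have cardC: "card (V - S) = card V - beta V E" using card_V_Diff[OF G SV] S(2) by simp
  show "(\<forall>u\<in>V. \<forall>v\<in>V. u \<noteq> v \<longrightarrow> \<not> nbhd V E u \<subseteq> nbhd V E v) \<Longrightarrow> gamma_DLD V E \<le> card V - beta V E"
  proof -
    assume H: "\<forall>u\<in>V. \<forall>v\<in>V. u \<noteq> v \<longrightarrow> \<not> nbhd V E u \<subseteq> nbhd V E v"
    have "solid_LD V E (V - S)"
      unfolding solid_LD_def VC
    proof (intro conjI ballI impI)
      show "code V (V - S)" by (rule codeC)
    next
      fix u assume "u \<in> S" then show "I_code V E (V - S) u \<noteq> {}" by (rule Ine)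
    next
      fix u v assume uv: "u \<in> S" "v \<in> S" "u \<noteq> v"
      have "u \<in> V" "v \<in> V" using uv SV by blast+
      then have "\<not> nbhd V E u \<subseteq> nbhd V E v" using H uv(3) by blast
      then show "\<not> I_code V E (V - S) u \<subseteq> I_code V E (V - S) v" using Ieq[OF uv(1)] Ieq[OF uv(2)] by simp
    qed
    then show ?thesis using gamma_DLD_le[OF G] cardC by fastforce
  qed
  show "(\<forall>u\<in>V. \<forall>v\<in>V. u \<noteq> v \<longrightarrow> \<not> nbhd V E u \<subseteq> cnbhd V E v) \<Longrightarrow> gamma_SLD V E \<le> card V - beta V E"
  proof -
    assume H: "\<forall>u\<in>V. \<forall>v\<in>V. u \<noteq> v \<longrightarrow> \<not> nbhd V E u \<subseteq> cnbhd V E v"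
    have "self_LD V E (V - S)"
      unfolding self_LD_def VC
    proof (intro conjI ballI)
      show "code V (V - S)" by (rule codeC)
    next
      fix u assume "u \<in> S" then show "I_code V E (V - S) u \<noteq> {}" by (rule Ine)
    next
      fix u assume uS: "u \<in> S"
      have uV: "u \<in> V" using uS SV by blast
      obtain c0 where c0: "c0 \<in> nbhd V E u" using nb[OF uV] by blast
      have sup: "u \<in> cnbhd V E c" if c: "c \<in> nbhd V E u" for c
      proof -
        have "E u c" using c unfolding nbhd_def by simp
        then have "E c u" using sym[of u c] by simp
        then show ?thesis using uV unfolding cnbhd_def nbhd_def by simp
      qed
      have sub: "w = u" if w: "w \<in> (\<Inter>c\<in>nbhd V E u. cnbhd V E c)" for w
      proof (rule ccontr)
        assume wu: "w \<noteq> u"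
        have "w \<in> cnbhd V E c0" using w c0 by blast
        then have wV: "w \<in> V" using c0 unfolding cnbhd_def nbhd_def by blast
        have "nbhd V E u \<subseteq> cnbhd V E w"
        proof
          fix c assume c: "c \<in> nbhd V E u"
          then have cV: "c \<in> V" unfolding nbhd_def by simp
          have "w \<in> cnbhd V E c" using w c by blast
          then have "w = c \<or> E c w" unfolding cnbhd_def nbhd_def by blast
          then show "c \<in> cnbhd V E w"
          proof
            assume "w = c" then show ?thesis unfolding cnbhd_def by blast
          next
            assume "E c w" then have "E w c" using sym[of c w] by simp
            then show ?thesis using cV unfolding cnbhd_def nbhd_def by simp
          qed
        qed
        moreover have "u \<noteq> w" using wu by simp
        ultimately show False using bspec[OF bspec[OF H uV] wV] by simp
      qed
      show "(\<Inter>c\<in>I_code V E (V - S) u. cnbhd V E c) = {u}"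
        unfolding Ieq[OF uS] using sup sub by blast
    qed
    then show ?thesis using gamma_SLD_le[OF G] cardC by fastforce
  qed
  have cov: "V \<subseteq> (\<Union>s\<in>S. cnbhd V E s)"
  proof
    fix v assume v: "v \<in> V"
    show "v \<in> (\<Union>s\<in>S. cnbhd V E s)"
    proof (rule ccontr)
      assume nc: "v \<notin> (\<Union>s\<in>S. cnbhd V E s)"
      have nv: "v \<notin> cnbhd V E s" if "s \<in> S" for s using nc that by blast
      have vS: "v \<notin> S"
      proof
        assume "v \<in> S" then show False using nv[of v] unfolding cnbhd_def by blast
      qed
      have "indep V E (insert v S)"
        unfolding indep_def
      proof (intro conjI ballI)
        show "insert v S \<subseteq> V" using v SV by blast
      next
        fix a b assume a: "a \<in> insert v S" and b: "b \<in> insert v S"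
        show "\<not> E a b"
        proof
          assume ab: "E a b"
          show False
          proof (cases "a = v")
            case True
            show False
            proof (cases "b = v")
              case True then show False using ab \<open>a = v\<close> irr by simp
            next
              case False
              then have bS: "b \<in> S" using b by blast
              have "E b v" using ab \<open>a = v\<close> sym[of v b] by simp
              then have "v \<in> cnbhd V E b" using v unfolding cnbhd_def nbhd_def by simp
              then show False using nv[OF bS] by simp
            qed
          next
            case False
            then have aS: "a \<in> S" using a by blast
            show False
            proof (cases "b = v")
              case True
              then have "v \<in> cnbhd V E a" using ab v unfolding cnbhd_def nbhd_def by simp
              then show False using nv[OF aS] by simp
            next
              case False
              then have "b \<in> S" using b by blast
              then show False using noE[OF aS] ab by simp
            qed
          qed
        qed
      qed
      then have c1: "card (insert v S) \<le> card S" using mx[of "insert v S"] S(2) by simp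
      have "card (insert v S) = card S + 1" using finS vS by simp
      then show False using c1 by simp
    qed
  qed
  have cardB: "card (cnbhd V E s) \<le> ?D + 1" if s: "s \<in> S" for s
  proof -
    have sV: "s \<in> V" using s SV by blast
    have "s \<notin> nbhd V E s" using irr unfolding nbhd_def by blast
    then have "card (cnbhd V E s) = card (nbhd V E s) + 1" unfolding cnbhd_def using finite_nbhd[OF G, of s] by simp
    then show ?thesis using deg_le[OF G sV] by simp
  qed
  have finB: "finite (cnbhd V E s)" for s unfolding cnbhd_def using finite_nbhd[OF G, of s] by simp
  have "card V \<le> card S * (?D + 1)"
    using card_cover[OF finS cov cardB finB] .
  then show "int (card V - beta V E) \<le> \<lfloor>real (card V) * (1 - 1 / (real ?D + 1))\<rfloor>"
    using floor_bound[of "card V" "card S" "?D"] card_mono[OF finV SV] S(2) by simp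
qed


theorem mainTheorem8:
  fixes V :: "'a set" and E :: "'a \<Rightarrow> 'a \<Rightarrow> bool"
  assumes G: "graph V E"
    and conn: "connected_graph V E"
    and n2: "card V \<ge> 2"
  defines "n \<equiv> card V" and "\<Delta> \<equiv> max_degree V E"
  shows "(gamma_DLD V E \<le> n - beta2 V E \<and>
          int (n - beta2 V E) \<le> \<lfloor>real n * (1 - 1 / (real \<Delta> ^ 2 + 1))\<rfloor>)
       \<and> ((\<forall>u\<in>V. \<forall>v\<in>V. u \<noteq> v \<longrightarrow> \<not> nbhd V E u \<subseteq> nbhd V E v) \<longrightarrow>
          gamma_DLD V E \<le> n - beta V E \<and>
          int (n - beta V E) \<le> \<lfloor>real n * (1 - 1 / (real \<Delta> + 1))\<rfloor>)
       \<and> ((\<forall>u\<in>V. \<forall>v\<in>V. u \<noteq> v \<longrightarrow> \<not> nbhd V E u \<subseteq> cnbhd V E v) \<longrightarrow>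
          gamma_SLD V E \<le> n - beta V E \<and>
          int (n - beta V E) \<le> \<lfloor>real n * (1 - 1 / (real \<Delta> + 1))\<rfloor>)"
  proof -
  note p1 = part1[OF G conn n2]
  note p23 = part23[OF G conn n2]
  show ?thesis unfolding n_def \<Delta>_def using p1 p23 by blast
qed

end
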